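(* Let $\hat h:\mathbb A\to\mathbb R$ be continuous with $\hat h(x,y+1)=\hat h(x,y)+1$, such that every level set $A_\xi=\hat h^{-1}\{\xi\}$, $\xi\in\mathbb R$, is an essential annular continuum, and put $A^\pm_\xi=\partial\mathcal U^\pm(A_\xi)$. If $A_\xi$ is thin, then, in the Hausdorff metric, $\lim_{\xi'\nearrow\xi}A^-_{\xi'}=\lim_{\xi'\nearrow\xi}A_{\xi'}=A^-_\xi$ and $\lim_{\xi'\searrow\xi}A^+_{\xi'}=\lim_{\xi'\searrow\xi}A_{\xi'}=A^+_\xi$.
   Context: $\mathbb A=\mathbb S^1\times\mathbb R$. An essential annular continuum $A\subset\mathbb A$ is a continuum such that $\mathbb A\setminus A$ consists of exactly two connected components, $\mathcal U^+(A)$ unbounded above and $\mathcal U^-(A)$ unbounded below. Thin means empty interior. Hausdorff distance: $d_{\mathcal H}(C,D)=\max\{\sup_{x\in C}d(x,D),\sup_{y\in D}d(y,C)\}$. *)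

theory Defs
  imports "HOL-Analysis.Analysis"
begin

text \<open>The open annulus S^1 x R, realised as the subset (unit circle in C) x R of complex x real.\<close>
definition Ann :: "(complex \<times> real) set" where
  "Ann = sphere 0 1 \<times> UNIV"

definition essential_annular_continuum :: "(complex \<times> real) set \<Rightarrow> bool" where
  "essential_annular_continuum C \<longleftrightarrow>
     C \<subseteq> Ann \<and> compact C \<and> connected C \<and> C \<noteq> {} \<and>
     (\<exists>U V. components (Ann - C) = {U, V} \<and> U \<noteq> V \<and>
            \<not> bdd_above (snd ` U) \<and> \<not> bdd_below (snd ` V))"

definition U_plus :: "(complex \<times> real) set \<Rightarrow> (complex \<times> real) set" where
  "U_plus C = \<Union>{U \<in> components (Ann - C). \<not> bdd_above (snd ` U)}"

definition U_minus :: "(complex \<times> real) set \<Rightarrow> (complex \<times> real) set" where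
  "U_minus C = \<Union>{U \<in> components (Ann - C). \<not> bdd_below (snd ` U)}"

definition bd_Ann :: "(complex \<times> real) set \<Rightarrow> (complex \<times> real) set" where
  "bd_Ann S = (top_of_set Ann) frontier_of S"

definition thin :: "(complex \<times> real) set \<Rightarrow> bool" where
  "thin C \<longleftrightarrow> (top_of_set Ann) interior_of C = {}"

definition hausdist :: "'a::metric_space set \<Rightarrow> 'a set \<Rightarrow> real" where
  "hausdist C D = max (SUP x\<in>C. infdist x D) (SUP y\<in>D. infdist y C)"

end

theory Submission
  imports Defs
begin


lemma hausdist_le:
  fixes C D :: "'a::metric_space set"
  assumes ne: "C \<noteq> {}" "D \<noteq> {}" and bd: "bounded C" "bounded D"
    and h1: "\<forall>x\<in>C. infdist x D \<le> e" and h2: "\<forall>y\<in>D. infdist y C \<le> e"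
  shows "hausdist C D \<le> e \<and> 0 \<le> hausdist C D"
proof -
  obtain d0 where d0: "d0 \<in> D" using ne by auto
  obtain c0 where c0: "c0 \<in> C" using ne by auto
  obtain B1 where B1: "\<forall>x\<in>C. dist c0 x \<le> B1" using bd(1) bounded_any_center by metis
  obtain B2 where B2: "\<forall>x\<in>D. dist d0 x \<le> B2" using bd(2) bounded_any_center by metis
  have b1: "bdd_above ((\<lambda>x. infdist x D) ` C)"
  proof (rule bdd_aboveI2)
    fix x assume "x \<in> C"
    then have "infdist x D \<le> dist x d0" using infdist_le[OF d0] by auto
    also have "\<dots> \<le> dist c0 x + dist c0 d0" by (metis dist_commute dist_triangle)
    finally show "infdist x D \<le> B1 + dist c0 d0" using B1 \<open>x\<in>C\<close> by force
  qed
  have b2: "bdd_above ((\<lambda>x. infdist x C) ` D)"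
  proof (rule bdd_aboveI2)
    fix x assume "x \<in> D"
    then have "infdist x C \<le> dist x c0" using infdist_le[OF c0] by auto
    also have "\<dots> \<le> dist d0 x + dist d0 c0" by (metis dist_commute dist_triangle)
    finally show "infdist x C \<le> B2 + dist d0 c0" using B2 \<open>x\<in>D\<close> by force
  qed
  have s1: "(SUP x\<in>C. infdist x D) \<le> e" using h1 ne by (intro cSUP_least) auto
  have s2: "(SUP x\<in>D. infdist x C) \<le> e" using h2 ne by (intro cSUP_least) auto
  have t1: "0 \<le> (SUP x\<in>C. infdist x D)"
    using cSUP_upper[OF c0 b1] infdist_nonneg[of c0 D] by linarith
  show ?thesis using s1 s2 t1 unfolding hausdist_def by auto
qed


lemma closed_Ann: "closed Ann" unfolding Ann_def by (simp add: closed_Times)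

lemma L_openin:
  assumes "continuous_on Ann f"
  shows "openin (top_of_set Ann) {p \<in> Ann. f p < (c::real)}"
proof -
  have "openin (top_of_set Ann) (Ann \<inter> f -` {..<c})"
    using assms continuous_openin_preimage_gen[of Ann f "{..<c}"] by auto
  moreover have "Ann \<inter> f -` {..<c} = {p \<in> Ann. f p < c}" by auto
  ultimately show ?thesis by simp
qed

lemma closure_of_Ann: "(top_of_set Ann) closure_of S = Ann \<inter> closure (Ann \<inter> S)"
  by (simp add: closure_of_subtopology)

lemma F_sub:
  assumes "continuous_on Ann f"
  shows "(top_of_set Ann) frontier_of {p \<in> Ann. f p < (c::real)} \<subseteq> {p \<in> Ann. f p = c}"
proof
  fix x assume x: "x \<in> (top_of_set Ann) frontier_of {p \<in> Ann. f p < c}"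
  have int: "(top_of_set Ann) interior_of {p \<in> Ann. f p < c} = {p \<in> Ann. f p < c}"
    using interior_of_openin[OF L_openin[OF assms]] .
  have cl: "closed (Ann \<inter> f -` {..c})"
    using continuous_closed_preimage[OF assms closed_Ann] by auto
  have "closure (Ann \<inter> {p \<in> Ann. f p < c}) \<subseteq> Ann \<inter> f -` {..c}"
    by (rule closure_minimal[OF _ cl]) auto
  then have "x \<in> Ann \<and> f x \<le> c" "\<not> (x \<in> Ann \<and> f x < c)"
    using x unfolding frontier_of_def closure_of_Ann int by auto
  then show "x \<in> {p \<in> Ann. f p = c}" by auto
qed

lemma part1:
  fixes f :: "complex \<times> real \<Rightarrow> real"
  assumes cont: "continuous_on Ann f"
    and cpt: "\<And>a b. compact {p \<in> Ann. a \<le> f p \<and> f p \<le> b}"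
    and e: "e > 0"
  shows "\<exists>d>0. \<forall>\<eta>. \<xi> - d < \<eta> \<and> \<eta> < \<xi> \<longrightarrow>
           (\<forall>x\<in>{p \<in> Ann. f p = \<eta>}. infdist x ((top_of_set Ann) frontier_of {p \<in> Ann. f p < \<xi>}) < e)"
proof -
  define F where "F = (top_of_set Ann) frontier_of {p \<in> Ann. f p < \<xi>}"
  define K where "K = {p \<in> Ann. \<xi> - 1 \<le> f p \<and> f p \<le> \<xi>} \<inter> closure {p \<in> Ann. f p < \<xi>}
                       \<inter> (\<lambda>p. infdist p F) -` {e..}"
  have cK: "compact K" unfolding K_def
  proof (intro compact_Int_closed closed_Int)
    show "closed ((\<lambda>p. infdist p F) -` {e..})"
      by (intro continuous_closed_vimage) (auto intro!: continuous_intros)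
  qed (auto simp: cpt)
  have lt: "f p < \<xi>" if "p \<in> K" for p
  proof (rule ccontr)
    assume "\<not> f p < \<xi>"
    with that have fp: "f p = \<xi>" "p \<in> Ann" "p \<in> closure {p \<in> Ann. f p < \<xi>}" unfolding K_def by auto
    have int: "(top_of_set Ann) interior_of {p \<in> Ann. f p < \<xi>} = {p \<in> Ann. f p < \<xi>}"
      using interior_of_openin[OF L_openin[OF cont]] .
    have "p \<in> F" unfolding F_def frontier_of_def closure_of_Ann int using fp
      by (simp add: Int_absorb1 subset_iff)
    then have "infdist p F = 0" by simp
    with that e show False unfolding K_def by auto
  qed
  show ?thesis
  proof (cases "K = {}")
    case True
    show ?thesis
    proof (intro exI[of _ 1] conjI allI impI ballI)
      fix \<eta> x assume \<eta>: "\<xi> - 1 < \<eta> \<and> \<eta> < \<xi>" and x: "x \<in> {p \<in> Ann. f p = \<eta>}"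
      have "x \<in> closure {p \<in> Ann. f p < \<xi>}" using x \<eta> closure_subset by fastforce
      then have "x \<notin> (\<lambda>p. infdist p F) -` {e..}" using True x \<eta> unfolding K_def by auto
      then have "infdist x F < e" by auto
      then show "infdist x ((top_of_set Ann) frontier_of {p \<in> Ann. f p < \<xi>}) < e" unfolding F_def .
    qed auto
  next
    case False
    have "compact (f ` K)" 
      by (rule compact_continuous_image[OF continuous_on_subset[OF cont] cK]) (auto simp: K_def)
    then obtain m where m: "m \<in> f ` K" "\<forall>y\<in>f ` K. y \<le> m"
      using compact_attains_sup[of "f ` K"] False by blast
    have m\<xi>: "m < \<xi>" using m(1) lt by auto
    show ?thesis
    proof (intro exI[of _ "min 1 (\<xi> - m)"] conjI allI impI ballI)
      fix \<eta> x assume \<eta>: "\<xi> - min 1 (\<xi> - m) < \<eta> \<and> \<eta> < \<xi>" and x: "x \<in> {p \<in> Ann. f p = \<eta>}"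
      have "x \<in> closure {p \<in> Ann. f p < \<xi>}" using x \<eta> closure_subset by fastforce
      moreover have "x \<notin> K" using m(2) x \<eta> by force
      ultimately have "x \<notin> (\<lambda>p. infdist p F) -` {e..}" using x \<eta> unfolding K_def by auto
      then have "infdist x F < e" by auto
      then show "infdist x ((top_of_set Ann) frontier_of {p \<in> Ann. f p < \<xi>}) < e" unfolding F_def .
    qed (use m\<xi> in auto)
  qed
qed

lemma locally_connected_Ann: "locally connected Ann"
  unfolding Ann_def
  by (rule locally_Times[OF locally_connected_sphere locally_connected_UNIV])
     (auto intro: connected_Times)

lemma part2:
  fixes f :: "complex \<times> real \<Rightarrow> real"
  assumes cont: "continuous_on Ann f"
    and cpt: "\<And>a b. compact {p \<in> Ann. a \<le> f p \<and> f p \<le> b}"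
    and e: "e > 0"
  shows "\<exists>d>0. \<forall>\<eta>. \<xi> - d < \<eta> \<and> \<eta> < \<xi> \<longrightarrow>
           (\<forall>y\<in>(top_of_set Ann) frontier_of {p \<in> Ann. f p < \<xi>}.
              \<exists>q\<in>(top_of_set Ann) frontier_of {p \<in> Ann. f p < \<eta>}. dist y q < e)"
proof -
  define F where "F = (top_of_set Ann) frontier_of {p \<in> Ann. f p < \<xi>}"
  have FA: "F \<subseteq> {p \<in> Ann. f p = \<xi>}" unfolding F_def by (rule F_sub[OF cont])
  have cF: "compact F"
  proof -
    have "closed F" unfolding F_def
      using closedin_closed_trans[OF closedin_frontier_of closed_Ann] .
    moreover have "compact {p \<in> Ann. f p = \<xi>}" 
    proof -
      have "{p \<in> Ann. f p = \<xi>} = {p \<in> Ann. \<xi> \<le> f p \<and> f p \<le> \<xi>}" by auto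
      then show ?thesis using cpt[of \<xi> \<xi>] by simp
    qed
    ultimately show ?thesis using FA by (metis compact_Int_closed inf.absorb2)
  qed
  have "\<forall>y\<in>F. \<exists>Op. open Op \<and> connected (Ann \<inter> Op) \<and> y \<in> Op \<and> Ann \<inter> Op \<subseteq> ball y (e/2)"
  proof
    fix y assume y: "y \<in> F"
    have "openin (top_of_set Ann) (Ann \<inter> ball y (e/2))" by (auto intro: openin_open_Int)
    moreover have "y \<in> Ann \<inter> ball y (e/2)" using y FA e by auto
    ultimately obtain u where u: "openin (top_of_set Ann) u" "connected u" "y \<in> u"
      "u \<subseteq> Ann \<inter> ball y (e/2)"
      using locally_connected_Ann unfolding locally_connected by meson
    then obtain Op where "open Op" "u = Ann \<inter> Op" by (auto simp: openin_open)
    then show "\<exists>Op. open Op \<and> connected (Ann \<inter> Op) \<and> y \<in> Op \<and> Ann \<inter> Op \<subseteq> ball y (e/2)"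
      using u by auto
  qed
  then obtain Op where Op: "\<And>y. y \<in> F \<Longrightarrow> open (Op y) \<and> connected (Ann \<inter> Op y) \<and> y \<in> Op y
      \<and> Ann \<inter> Op y \<subseteq> ball y (e/2)" by metis
  have "\<forall>y\<in>F. \<exists>w. w \<in> Ann \<inter> Op y \<and> f w < \<xi>"
  proof
    fix y assume y: "y \<in> F"
    then have "y \<in> (top_of_set Ann) closure_of {p \<in> Ann. f p < \<xi>}"
      unfolding F_def frontier_of_def by auto
    moreover have "openin (top_of_set Ann) (Ann \<inter> Op y)" using Op[OF y] by (auto intro: openin_open_Int)
    moreover have "y \<in> Ann \<inter> Op y" using Op[OF y] y FA by auto
    ultimately obtain w where "w \<in> {p \<in> Ann. f p < \<xi>}" "w \<in> Ann \<inter> Op y"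
      unfolding in_closure_of by blast
    then show "\<exists>w. w \<in> Ann \<inter> Op y \<and> f w < \<xi>" by blast
  qed
  then obtain w where w: "\<And>y. y \<in> F \<Longrightarrow> w y \<in> Ann \<inter> Op y \<and> f (w y) < \<xi>" by metis
  obtain T where T: "T \<subseteq> F" "finite T" "F \<subseteq> (\<Union>y\<in>T. Op y)"
    using compactE_image[OF cF, of F Op] Op by blast
  show ?thesis
  proof (cases "F = {}")
    case True
    show ?thesis using True unfolding F_def by (intro exI[of _ 1]) auto
  next
    case False
    then have Tne: "T \<noteq> {}" using T by auto
    define m where "m = Max ((\<lambda>y. f (w y)) ` T)"
    have m\<xi>: "m < \<xi>" unfolding m_def using T Tne w by (subst Max_less_iff) auto
    have wm: "f (w y) \<le> m" if "y \<in> T" for y unfolding m_def using T that by (intro Max_ge) auto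
    show ?thesis
    proof (intro exI[of _ "\<xi> - m"] conjI allI impI ballI)
      fix \<eta> y' assume \<eta>: "\<xi> - (\<xi> - m) < \<eta> \<and> \<eta> < \<xi>"
        and y': "y' \<in> (top_of_set Ann) frontier_of {p \<in> Ann. f p < \<xi>}"
      then have y'F: "y' \<in> F" unfolding F_def by simp
      then obtain y where y: "y \<in> T" "y' \<in> Op y" using T by auto
      have yF: "y \<in> F" using y T by auto
      let ?S = "Ann \<inter> Op y"
      have conn: "connectedin (top_of_set Ann) ?S"
        using Op[OF yF] by (simp add: connectedin_subtopology)
      have "w y \<in> ?S \<inter> {p \<in> Ann. f p < \<eta>}" using w[OF yF] wm[OF y(1)] \<eta> by auto
      moreover have "y' \<in> ?S - {p \<in> Ann. f p < \<eta>}" using y'F FA y \<eta> by auto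
      ultimately obtain q where q: "q \<in> ?S" "q \<in> (top_of_set Ann) frontier_of {p \<in> Ann. f p < \<eta>}"
        using connectedin_Int_frontier_of[OF conn, of "{p \<in> Ann. f p < \<eta>}"] by blast
      have "dist y' q \<le> dist y y' + dist y q" by (metis dist_commute dist_triangle)
      also have "\<dots> < e/2 + e/2"
        using Op[OF yF] q(1) y'F FA y(2) by (intro add_strict_mono) auto
      finally show "\<exists>q\<in>(top_of_set Ann) frontier_of {p \<in> Ann. f p < \<eta>}. dist y' q < e"
        using q(2) by auto
    qed (use m\<xi> in auto)
  qed
qed

lemma left_generic:
  fixes f :: "complex \<times> real \<Rightarrow> real"
  assumes cont: "continuous_on Ann f"
    and cpt: "\<And>a b. compact {p \<in> Ann. a \<le> f p \<and> f p \<le> b}"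
    and ne: "\<And>\<eta>. {p \<in> Ann. f p = \<eta>} \<noteq> {}"
    and Fne: "(top_of_set Ann) frontier_of {p \<in> Ann. f p < \<xi>} \<noteq> {}"
  shows "((\<lambda>\<eta>. hausdist ((top_of_set Ann) frontier_of {p \<in> Ann. f p < \<eta>})
                         ((top_of_set Ann) frontier_of {p \<in> Ann. f p < \<xi>})) \<longlongrightarrow> 0) (at_left \<xi>) \<and>
         ((\<lambda>\<eta>. hausdist {p \<in> Ann. f p = \<eta>}
                         ((top_of_set Ann) frontier_of {p \<in> Ann. f p < \<xi>})) \<longlongrightarrow> 0) (at_left \<xi>)"
proof -
  define F where "F = (\<lambda>\<eta>. (top_of_set Ann) frontier_of {p \<in> Ann. f p < \<eta>})"
  define A where "A = (\<lambda>\<eta>. {p \<in> Ann. f p = \<eta>})"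
  have FA: "F \<eta> \<subseteq> A \<eta>" for \<eta> unfolding F_def A_def by (rule F_sub[OF cont])
  have cA: "compact (A \<eta>)" for \<eta>
  proof -
    have "A \<eta> = {p \<in> Ann. \<eta> \<le> f p \<and> f p \<le> \<eta>}" unfolding A_def by auto
    then show ?thesis using cpt[of \<eta> \<eta>] by simp
  qed
  have bA: "bounded (A \<eta>)" for \<eta> using cA compact_imp_bounded by auto
  have bF: "bounded (F \<eta>)" for \<eta> using bA FA bounded_subset by metis
  have main: "eventually (\<lambda>\<eta>. hausdist (F \<eta>) (F \<xi>) \<le> e/2 \<and> 0 \<le> hausdist (F \<eta>) (F \<xi>) \<and>
      hausdist (A \<eta>) (F \<xi>) \<le> e/2 \<and> 0 \<le> hausdist (A \<eta>) (F \<xi>)) (at_left \<xi>)"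
    if e: "e > 0" for e
  proof -
    have e2: "e/2 > 0" using e by auto
    obtain d1 where d1: "d1 > 0" "\<forall>\<eta>. \<xi> - d1 < \<eta> \<and> \<eta> < \<xi> \<longrightarrow> (\<forall>x\<in>A \<eta>. infdist x (F \<xi>) < e/2)"
      using part1[OF cont cpt e2, of \<xi>] unfolding A_def F_def by blast
    obtain d2 where d2: "d2 > 0" "\<forall>\<eta>. \<xi> - d2 < \<eta> \<and> \<eta> < \<xi> \<longrightarrow> (\<forall>y\<in>F \<xi>. \<exists>q\<in>F \<eta>. dist y q < e/2)"
      using part2[OF cont cpt e2, of \<xi>] unfolding F_def by blast
    have ev: "eventually (\<lambda>\<eta>. \<eta> \<in> {\<xi> - min d1 d2<..<\<xi>}) (at_left \<xi>)"
      using d1 d2 by (intro eventually_at_left_real) auto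
    show ?thesis
    proof (rule eventually_mono[OF ev])
      fix \<eta> assume "\<eta> \<in> {\<xi> - min d1 d2<..<\<xi>}"
      then have "\<xi> - d1 < \<eta> \<and> \<eta> < \<xi>" "\<xi> - d2 < \<eta> \<and> \<eta> < \<xi>" by auto
      then have h1: "\<forall>x\<in>A \<eta>. infdist x (F \<xi>) < e/2" and h2: "\<forall>y\<in>F \<xi>. \<exists>q\<in>F \<eta>. dist y q < e/2"
        using d1(2) d2(2) by blast+
      have Fne': "F \<xi> \<noteq> {}" using Fne unfolding F_def by simp
      then have Fne\<eta>: "F \<eta> \<noteq> {}" using h2 by auto
      have Ane: "A \<eta> \<noteq> {}" using ne unfolding A_def by simp
      have i1: "\<forall>x\<in>F \<eta>. infdist x (F \<xi>) \<le> e/2" using h1 FA by force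
      have i2: "\<forall>y\<in>F \<xi>. infdist y (F \<eta>) \<le> e/2"
      proof
        fix y assume "y \<in> F \<xi>"
        then obtain q where "q \<in> F \<eta>" "dist y q < e/2" using h2 by auto
        then show "infdist y (F \<eta>) \<le> e/2" using infdist_le[of q "F \<eta>" y] by auto
      qed
      have i3: "\<forall>x\<in>A \<eta>. infdist x (F \<xi>) \<le> e/2" using h1 by force
      have i4: "\<forall>y\<in>F \<xi>. infdist y (A \<eta>) \<le> e/2"
      proof
        fix y assume "y \<in> F \<xi>"
        then obtain q where "q \<in> F \<eta>" "dist y q < e/2" using h2 by auto
        then show "infdist y (A \<eta>) \<le> e/2" using infdist_le[of q "A \<eta>" y] FA[of \<eta>] by force
      qed
      show "hausdist (F \<eta>) (F \<xi>) \<le> e/2 \<and> 0 \<le> hausdist (F \<eta>) (F \<xi>) \<and>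
        hausdist (A \<eta>) (F \<xi>) \<le> e/2 \<and> 0 \<le> hausdist (A \<eta>) (F \<xi>)"
        using hausdist_le[OF Fne\<eta> Fne' bF bF i1 i2] hausdist_le[OF Ane Fne' bA bF i3 i4] by auto
    qed
  qed
  have "((\<lambda>\<eta>. hausdist (F \<eta>) (F \<xi>)) \<longlongrightarrow> 0) (at_left \<xi>)"
  proof (rule tendstoI)
    fix e :: real assume "e > 0"
    show "eventually (\<lambda>\<eta>. dist (hausdist (F \<eta>) (F \<xi>)) 0 < e) (at_left \<xi>)"
    proof (rule eventually_mono[OF main[OF \<open>e > 0\<close>]])
      fix x assume "hausdist (F x) (F \<xi>) \<le> e/2 \<and> 0 \<le> hausdist (F x) (F \<xi>) \<and>
      hausdist (A x) (F \<xi>) \<le> e/2 \<and> 0 \<le> hausdist (A x) (F \<xi>)"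
      then show "dist (hausdist (F x) (F \<xi>)) 0 < e" using \<open>e > 0\<close> by (auto simp: dist_real_def)
    qed
  qed
  moreover have "((\<lambda>\<eta>. hausdist (A \<eta>) (F \<xi>)) \<longlongrightarrow> 0) (at_left \<xi>)"
  proof (rule tendstoI)
    fix e :: real assume "e > 0"
    show "eventually (\<lambda>\<eta>. dist (hausdist (A \<eta>) (F \<xi>)) 0 < e) (at_left \<xi>)"
    proof (rule eventually_mono[OF main[OF \<open>e > 0\<close>]])
      fix x assume "hausdist (F x) (F \<xi>) \<le> e/2 \<and> 0 \<le> hausdist (F x) (F \<xi>) \<and>
      hausdist (A x) (F \<xi>) \<le> e/2 \<and> 0 \<le> hausdist (A x) (F \<xi>)"
      then show "dist (hausdist (A x) (F \<xi>)) 0 < e" using \<open>e > 0\<close> by (auto simp: dist_real_def)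
    qed
  qed
  ultimately show ?thesis unfolding F_def A_def by simp
qed



lemma shift_nat:
  assumes per: "\<And>z y. z \<in> sphere 0 1 \<Longrightarrow> h (z, y + 1) = h (z, y) + 1" and z: "z \<in> sphere 0 1"
  shows "h (z, y + real n) = h (z, y) + real n"
proof (induction n)
  case (Suc n)
  have "h (z, y + real (Suc n)) = h (z, (y + real n) + 1)" by (simp add: algebra_simps)
  also have "\<dots> = h (z, y + real n) + 1" using per z by blast
  finally show ?case using Suc by simp
qed simp

lemma h_bounds:
  fixes h :: "complex \<times> real \<Rightarrow> real"
  assumes cont: "continuous_on Ann h"
    and per: "\<And>z y. z \<in> sphere 0 1 \<Longrightarrow> h (z, y + 1) = h (z, y) + 1"
  shows "\<exists>M. \<forall>z\<in>sphere 0 1. \<forall>y. y - M \<le> h (z, y) \<and> h (z, y) \<le> y + M"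
proof -
  have "compact (h ` (sphere 0 1 \<times> {0..1}))"
    by (rule compact_continuous_image[OF continuous_on_subset[OF cont]])
       (auto simp: Ann_def compact_Times)
  then obtain B where B: "\<forall>x\<in>h ` (sphere 0 1 \<times> {0..1}). norm x \<le> B"
    using compact_imp_bounded bounded_iff by metis
  have "y - (B+1) \<le> h (z, y) \<and> h (z, y) \<le> y + (B+1)" if z: "z \<in> sphere 0 1" for z y
  proof -
    define k where "k = \<lfloor>y\<rfloor>"
    define t where "t = y - of_int k"
    have t01: "t \<in> {0..1}" unfolding t_def k_def
      by (simp add: less_imp_le) linarith
    have eq: "h (z, y) = h (z, t) + of_int k"
    proof (cases "k \<ge> 0")
      case True
      then have "y = t + real (nat k)" unfolding t_def by simp
      then show ?thesis using shift_nat[OF per z, of t "nat k"] True by simp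
    next
      case False
      then have "t = y + real (nat (-k))" unfolding t_def by simp
      then show ?thesis using shift_nat[OF per z, of y "nat (-k)"] False by simp
    qed
    have hb: "\<bar>h (z, t)\<bar> \<le> B" using B z t01 by auto
    have "of_int k \<le> y" "y < of_int k + 1" unfolding k_def by linarith+
    then show ?thesis using eq hb by linarith
  qed
  then show ?thesis by blast
qed



theorem mainTheorem14:
  fixes h :: "complex \<times> real \<Rightarrow> real" and \<xi> :: real
  assumes cont: "continuous_on Ann h"
    and per: "\<And>z y. z \<in> sphere 0 1 \<Longrightarrow> h (z, y + 1) = h (z, y) + 1"
    and ess: "\<And>\<eta>. essential_annular_continuum {p \<in> Ann. h p = \<eta>}"
    and thn: "thin {p \<in> Ann. h p = \<xi>}"
  shows "((\<lambda>\<eta>. hausdist (bd_Ann (U_minus {p \<in> Ann. h p = \<eta>}))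
                         (bd_Ann (U_minus {p \<in> Ann. h p = \<xi>}))) \<longlongrightarrow> 0) (at_left \<xi>) \<and>
         ((\<lambda>\<eta>. hausdist {p \<in> Ann. h p = \<eta>}
                         (bd_Ann (U_minus {p \<in> Ann. h p = \<xi>}))) \<longlongrightarrow> 0) (at_left \<xi>) \<and>
         ((\<lambda>\<eta>. hausdist (bd_Ann (U_plus {p \<in> Ann. h p = \<eta>}))
                         (bd_Ann (U_plus {p \<in> Ann. h p = \<xi>}))) \<longlongrightarrow> 0) (at_right \<xi>) \<and>
         ((\<lambda>\<eta>. hausdist {p \<in> Ann. h p = \<eta>}
                         (bd_Ann (U_plus {p \<in> Ann. h p = \<xi>}))) \<longlongrightarrow> 0) (at_right \<xi>)"
proof -
  obtain M where M: "\<And>z y. z \<in> sphere 0 1 \<Longrightarrow> y - M \<le> h (z, y) \<and> h (z, y) \<le> y + M"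
    using h_bounds[OF cont per] by blast
  have MA: "snd p - M \<le> h p \<and> h p \<le> snd p + M" if "p \<in> Ann" for p
    using M[of "fst p" "snd p"] that by (cases p) (auto simp: Ann_def)
  have cpt: "compact {p \<in> Ann. a \<le> h p \<and> h p \<le> b}" for a b
  proof -
    have "compact ((sphere 0 1 \<times> {a - M..b + M}) \<inter> (Ann \<inter> h -` {a..b}))"
      by (intro compact_Int_closed continuous_closed_preimage[OF cont closed_Ann])
         (auto simp: compact_Times)
    moreover have "(sphere 0 1 \<times> {a - M..b + M}) \<inter> (Ann \<inter> h -` {a..b}) = {p \<in> Ann. a \<le> h p \<and> h p \<le> b}"
      using MA by (fastforce simp: Ann_def)
    ultimately show ?thesis by simp
  qed
  have cpt': "compact {p \<in> Ann. a \<le> (\<lambda>p. - h p) p \<and> (\<lambda>p. - h p) p \<le> b}" for a b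
  proof -
    have "{p \<in> Ann. a \<le> (\<lambda>p. - h p) p \<and> (\<lambda>p. - h p) p \<le> b} = {p \<in> Ann. -b \<le> h p \<and> h p \<le> -a}" by auto
    then show ?thesis using cpt by simp
  qed
  have cont': "continuous_on Ann (\<lambda>p. - h p)" using cont by (intro continuous_intros)
  have ne: "{p \<in> Ann. h p = \<eta>} \<noteq> {}" for \<eta>
    using ess[of \<eta>] unfolding essential_annular_continuum_def by auto
  have ne': "{p \<in> Ann. (\<lambda>p. - h p) p = \<eta>} \<noteq> {}" for \<eta>
  proof -
    have "{p \<in> Ann. (\<lambda>p. - h p) p = \<eta>} = {p \<in> Ann. h p = -\<eta>}" by auto
    then show ?thesis using ne by simp
  qed
  have connAnn: "connectedin (top_of_set Ann) Ann"
    by (simp add: connectedin_subtopology Ann_def connected_Times connected_sphere)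
  have p1: "(1::complex, c) \<in> Ann" for c by (simp add: Ann_def)
  have Fne: "(top_of_set Ann) frontier_of {p \<in> Ann. h p < \<xi>} \<noteq> {}"
  proof -
    have "(1, \<xi> - M - 1) \<in> Ann \<inter> {p \<in> Ann. h p < \<xi>}" using MA[OF p1, of "\<xi> - M - 1"] p1 by auto
    moreover have "(1, \<xi> + M + 1) \<in> Ann - {p \<in> Ann. h p < \<xi>}" using MA[OF p1, of "\<xi> + M + 1"] p1 by auto
    ultimately show ?thesis using connectedin_Int_frontier_of[OF connAnn, of "{p \<in> Ann. h p < \<xi>}"] by auto
  qed
  have Fne': "(top_of_set Ann) frontier_of {p \<in> Ann. (\<lambda>p. - h p) p < -\<xi>} \<noteq> {}"
  proof -
    have "(1, \<xi> + M + 1) \<in> Ann \<inter> {p \<in> Ann. (\<lambda>p. - h p) p < -\<xi>}" using MA[OF p1, of "\<xi> + M + 1"] p1 by auto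
    moreover have "(1, \<xi> - M - 1) \<in> Ann - {p \<in> Ann. (\<lambda>p. - h p) p < -\<xi>}" using MA[OF p1, of "\<xi> - M - 1"] p1 by auto
    ultimately show ?thesis using connectedin_Int_frontier_of[OF connAnn, of "{p \<in> Ann. (\<lambda>p. - h p) p < -\<xi>}"] by auto
  qed
  have UU: "U_minus {p \<in> Ann. h p = \<eta>} = {p \<in> Ann. h p < \<eta>} \<and> U_plus {p \<in> Ann. h p = \<eta>} = {p \<in> Ann. h p > \<eta>}" for \<eta>
  proof -
    define C where "C = {p \<in> Ann. h p = \<eta>}"
    obtain U V where UV: "components (Ann - C) = {U, V}" "U \<noteq> V" "\<not> bdd_above (snd ` U)" "\<not> bdd_below (snd ` V)"
      using ess[of \<eta>] unfolding essential_annular_continuum_def C_def by meson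
    have side: "K \<subseteq> {p \<in> Ann. h p < \<eta>} \<or> K \<subseteq> {p \<in> Ann. h p > \<eta>}" if K: "K \<in> components (Ann - C)" for K
    proof (rule ccontr)
      assume nt: "\<not> (K \<subseteq> {p \<in> Ann. h p < \<eta>} \<or> K \<subseteq> {p \<in> Ann. h p > \<eta>})"
      have KS: "K \<subseteq> Ann - C" using in_components_subset[OF K] .
      then obtain p q where pq: "p \<in> K" "q \<in> K" "h p \<ge> \<eta>" "h q \<le> \<eta>" using nt KS by (auto simp: not_less subset_iff)
      have "connected (h ` K)"
        by (rule connected_continuous_image[OF continuous_on_subset[OF cont] in_components_connected[OF K]])
           (use KS in auto)
      then have "\<eta> \<in> h ` K" using pq unfolding connected_iff_interval by blast
      then show False using KS unfolding C_def by auto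
    qed
    have top: "K \<subseteq> {p \<in> Ann. h p > \<eta>}" if K: "K \<in> components (Ann - C)" "\<not> bdd_above (snd ` K)" for K
    proof -
      obtain p where p: "p \<in> K" "snd p > \<eta> + M" using K(2) unfolding bdd_above_def
        by (auto simp: not_le) (metis prod.collapse)
      have "p \<in> Ann" using in_components_subset[OF K(1)] p by auto
      then have "h p > \<eta>" using MA[of p] p by linarith
      then show ?thesis using side[OF K(1)] p by auto
    qed
    have bot: "K \<subseteq> {p \<in> Ann. h p < \<eta>}" if K: "K \<in> components (Ann - C)" "\<not> bdd_below (snd ` K)" for K
    proof -
      obtain p where p: "p \<in> K" "snd p < \<eta> - M" using K(2) unfolding bdd_below_def
        by (auto simp: not_le) (metis prod.collapse)
      have "p \<in> Ann" using in_components_subset[OF K(1)] p by auto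
      then have "h p < \<eta>" using MA[of p] p by linarith
      then show ?thesis using side[OF K(1)] p by auto
    qed
    have U: "U \<subseteq> {p \<in> Ann. h p > \<eta>}" using top UV by auto
    have V: "V \<subseteq> {p \<in> Ann. h p < \<eta>}" using bot UV by auto
    have un: "U \<union> V = Ann - C" using Union_components[of "Ann - C"] UV(1) by auto
    have Ueq: "U = {p \<in> Ann. h p > \<eta>}" using U V un unfolding C_def by auto
    have Veq: "V = {p \<in> Ann. h p < \<eta>}" using U V un unfolding C_def by auto
    have Ubb: "bdd_below (snd ` U)" unfolding Ueq bdd_below_def
      by (rule exI[of _ "\<eta> - M"]) (use MA in force)
    have Vba: "bdd_above (snd ` V)" unfolding Veq bdd_above_def
      by (rule exI[of _ "\<eta> + M"]) (use MA in force)
    have "U_minus C = V" unfolding U_minus_def UV(1) using Ubb UV(4) by auto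
    moreover have "U_plus C = U" unfolding U_plus_def UV(1) using Vba UV(3) by auto
    ultimately show ?thesis using Ueq Veq unfolding C_def by simp
  qed
  have L: "((\<lambda>\<eta>. hausdist ((top_of_set Ann) frontier_of {p \<in> Ann. h p < \<eta>})
                         ((top_of_set Ann) frontier_of {p \<in> Ann. h p < \<xi>})) \<longlongrightarrow> 0) (at_left \<xi>) \<and>
         ((\<lambda>\<eta>. hausdist {p \<in> Ann. h p = \<eta>}
                         ((top_of_set Ann) frontier_of {p \<in> Ann. h p < \<xi>})) \<longlongrightarrow> 0) (at_left \<xi>)"
    by (rule left_generic[OF cont cpt ne Fne])
  have R0: "((\<lambda>\<eta>. hausdist ((top_of_set Ann) frontier_of {p \<in> Ann. (\<lambda>p. - h p) p < \<eta>})
                         ((top_of_set Ann) frontier_of {p \<in> Ann. (\<lambda>p. - h p) p < -\<xi>})) \<longlongrightarrow> 0) (at_left (-\<xi>)) \<and>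
         ((\<lambda>\<eta>. hausdist {p \<in> Ann. (\<lambda>p. - h p) p = \<eta>}
                         ((top_of_set Ann) frontier_of {p \<in> Ann. (\<lambda>p. - h p) p < -\<xi>})) \<longlongrightarrow> 0) (at_left (-\<xi>))"
    by (rule left_generic[OF cont' cpt' ne' Fne'])
  have flip: "(g \<longlongrightarrow> 0) (at_right \<xi>)" if "((\<lambda>\<eta>. g (-\<eta>)) \<longlongrightarrow> (0::real)) (at_left (-\<xi>))" for g :: "real \<Rightarrow> real"
  proof -
    have "(g \<longlongrightarrow> 0) (filtermap uminus (at_left (-\<xi>)))"
      using that by (simp add: tendsto_compose_filtermap[symmetric] o_def)
    then show ?thesis by (simp add: at_right_minus)
  qed
  have e1: "{p \<in> Ann. - h p < \<eta>} = {p \<in> Ann. h p > - \<eta>}" for \<eta> by auto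
  have e2: "{p \<in> Ann. - h p = \<eta>} = {p \<in> Ann. h p = - \<eta>}" for \<eta> by auto
  have R: "((\<lambda>\<eta>. hausdist ((top_of_set Ann) frontier_of {p \<in> Ann. h p > \<eta>})
                         ((top_of_set Ann) frontier_of {p \<in> Ann. h p > \<xi>})) \<longlongrightarrow> 0) (at_right \<xi>) \<and>
         ((\<lambda>\<eta>. hausdist {p \<in> Ann. h p = \<eta>}
                         ((top_of_set Ann) frontier_of {p \<in> Ann. h p > \<xi>})) \<longlongrightarrow> 0) (at_right \<xi>)"
    using R0 unfolding e1 e2 by (intro conjI flip) simp_all
  have UU1: "U_minus {p \<in> Ann. h p = \<eta>} = {p \<in> Ann. h p < \<eta>}" for \<eta> using UU by blast
  have UU2: "U_plus {p \<in> Ann. h p = \<eta>} = {p \<in> Ann. h p > \<eta>}" for \<eta> using UU by blast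
  show ?thesis using L R unfolding bd_Ann_def UU1 UU2 by simp
qed

end
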